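(* Let $G=(\mathcal{V},\mathcal{E})$ be a simple connected graph and $\mathcal{C}$ a construction set of $G$. Then for all distinct $i,j\in\mathcal{V}$, $\{i,j\}\in\mathcal{E}$ if and only if $\Delta_{ij}=1$ (computed from $\mathbf{P}_{\mathcal{C}}$). In particular $G$ is recovered from $\mathbf{P}_{\mathcal{C}}$ by joining exactly the pairs with $\Delta_{ij}=1$.
   Context: All graphs are simple, undirected and connected. $h_{ij}$ is the shortest-path distance. For an ordered landmark set $\mathcal{M}=\{A_1,\dots,A_m\}\subseteq\mathcal{V}$, $\mathbf{P}_{\mathcal{M}}(i)=\langle h_{iA_1},\dots,h_{iA_m}\rangle$ and $\mathbf{P}_{\mathcal{M}}$ is the matrix with these rows. $\Delta^k_{ij}=|h_{iA_k}-h_{jA_k}|$ and $\Delta_{ij}=\max_k\Delta^k_{ij}$. $\mathcal{M}$ is a construction set of $G$ if $G$ is the unique simple connected graph on $\mathcal{V}$ whose distance vector matrix for landmarks $\mathcal{M}$ equals $\mathbf{P}_{\mathcal{M}}$. *)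

theory Defs
  imports Main
begin

definition simple_graph :: "'a set \<Rightarrow> 'a set set \<Rightarrow> bool" where
  "simple_graph V E \<longleftrightarrow> finite V \<and> (\<forall>e\<in>E. e \<subseteq> V \<and> card e = 2)"

definition walk :: "'a set set \<Rightarrow> 'a list \<Rightarrow> bool" where
  "walk E xs \<longleftrightarrow> xs \<noteq> [] \<and> (\<forall>k. Suc k < length xs \<longrightarrow> {xs ! k, xs ! Suc k} \<in> E)"

definition connected_graph :: "'a set \<Rightarrow> 'a set set \<Rightarrow> bool" where
  "connected_graph V E \<longleftrightarrow>
     (\<forall>u\<in>V. \<forall>v\<in>V. \<exists>xs. walk E xs \<and> hd xs = u \<and> last xs = v)"

definition hdist :: "'a set set \<Rightarrow> 'a \<Rightarrow> 'a \<Rightarrow> nat" where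
  "hdist E u v = (LEAST n. \<exists>xs. walk E xs \<and> hd xs = u \<and> last xs = v \<and> length xs = Suc n)"

definition dvec :: "'a set set \<Rightarrow> 'a list \<Rightarrow> 'a \<Rightarrow> nat list" where
  "dvec E M i = map (hdist E i) M"

definition landmark_set :: "'a set \<Rightarrow> 'a list \<Rightarrow> bool" where
  "landmark_set V M \<longleftrightarrow> M \<noteq> [] \<and> distinct M \<and> set M \<subseteq> V"

definition construction_set :: "'a set \<Rightarrow> 'a set set \<Rightarrow> 'a list \<Rightarrow> bool" where
  "construction_set V E M \<longleftrightarrow> landmark_set V M \<and>
     (\<forall>E'. simple_graph V E' \<and> connected_graph V E' \<and> (\<forall>i\<in>V. dvec E' M i = dvec E M i)
        \<longrightarrow> E' = E)"

definition Delta :: "'a set set \<Rightarrow> 'a list \<Rightarrow> 'a \<Rightarrow> 'a \<Rightarrow> int" where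
  "Delta E M i j = Max ((\<lambda>k. \<bar>int (dvec E M i ! k) - int (dvec E M j ! k)\<bar>) ` {..<length M})"

end

theory Submission
  imports Defs
begin

lemma walk_single[simp]: "walk E [x]" by (simp add: walk_def)

lemma walk_Cons2: "walk E (x # y # ys) \<longleftrightarrow> {x,y} \<in> E \<and> walk E (y # ys)"
proof
  assume h: "walk E (x # y # ys)"
  have "{x,y} \<in> E" using h unfolding walk_def by (metis One_nat_def length_Cons less_Suc_eq_0_disj nth_Cons_0 nth_Cons_Suc zero_less_Suc)
  moreover have "walk E (y # ys)" unfolding walk_def
  proof (intro conjI allI impI)
    fix k assume "Suc k < length (y # ys)"
    then have "Suc (Suc k) < length (x # y # ys)" by simp
    then have "{(x#y#ys) ! Suc k, (x#y#ys) ! Suc (Suc k)} \<in> E" using h unfolding walk_def by blast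
    then show "{(y # ys) ! k, (y # ys) ! Suc k} \<in> E" by simp
  qed simp
  ultimately show "{x,y} \<in> E \<and> walk E (y # ys)" by blast
next
  assume h: "{x,y} \<in> E \<and> walk E (y # ys)"
  show "walk E (x # y # ys)" unfolding walk_def
  proof (intro conjI allI impI)
    fix k assume k: "Suc k < length (x # y # ys)"
    show "{(x # y # ys) ! k, (x # y # ys) ! Suc k} \<in> E"
    proof (cases k)
      case 0 then show ?thesis using h by simp
    next
      case (Suc m)
      then have "Suc m < length (y # ys)" using k by simp
      then have "{(y#ys) ! m, (y#ys) ! Suc m} \<in> E" using h unfolding walk_def by blast
      then show ?thesis using Suc by simp
    qed
  qed simp
qed

lemma hdist_walk:
  assumes "walk E xs" "hd xs = u" "last xs = v"
  shows "\<exists>ys. walk E ys \<and> hd ys = u \<and> last ys = v \<and> length ys = Suc (hdist E u v)"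
proof -
  have "\<exists>n. \<exists>xs. walk E xs \<and> hd xs = u \<and> last xs = v \<and> length xs = Suc n"
    using assms by (metis Suc_pred length_greater_0_conv walk_def)
  then show ?thesis unfolding hdist_def by (rule LeastI_ex)
qed

lemma hdist_le:
  assumes "walk E xs" "hd xs = u" "last xs = v" "length xs = Suc n"
  shows "hdist E u v \<le> n"
  unfolding hdist_def by (rule Least_le) (use assms in blast)

lemma hdist_edge:
  assumes "{x,y} \<in> E" "walk E xs" "hd xs = y" "last xs = A"
  shows "hdist E x A \<le> Suc (hdist E y A)"
proof -
  obtain ys where ys: "walk E ys" "hd ys = y" "last ys = A" "length ys = Suc (hdist E y A)"
    using hdist_walk[OF assms(2-4)] by blast
  then obtain r where r: "ys = y # r" by (cases ys) (auto simp: walk_def)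
  have "walk E (x # ys)" using ys r assms(1) walk_Cons2 by metis
  moreover have "last (x # ys) = A" using ys r by simp
  ultimately show ?thesis using hdist_le[of E "x # ys" x A] ys by simp
qed

lemma walk_mono: "walk E xs \<Longrightarrow> E \<subseteq> E' \<Longrightarrow> walk E' xs"
  unfolding walk_def by blast

lemma walk_lower:
  assumes "f A = 0" "\<And>x y. {x,y} \<in> E' \<Longrightarrow> f x \<le> Suc (f y)"
  shows "walk E' xs \<Longrightarrow> last xs = A \<Longrightarrow> f (hd xs) < length xs"
proof (induction xs)
  case Nil then show ?case by (simp add: walk_def)
next
  case (Cons x xs)
  show ?case
  proof (cases xs)
    case Nil then show ?thesis using Cons assms by simp
  next
    case (Cons y ys)
    then have "{x,y} \<in> E'" "walk E' xs" using Cons.prems walk_Cons2 by metis+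
    moreover have "last xs = A" using Cons.prems Cons by simp
    ultimately have "f y < length xs" "f x \<le> Suc (f y)" using Cons.IH assms(2) Cons by auto
    then show ?thesis by simp
  qed
qed

lemma walk_append:
  "walk E xs \<Longrightarrow> walk E ys \<Longrightarrow> last xs = hd ys \<Longrightarrow> walk E (xs @ tl ys)"
proof (induction xs)
  case Nil then show ?case by (simp add: walk_def)
next
  case (Cons x xs)
  show ?case
  proof (cases xs)
    case Nil
    then have "x # xs @ tl ys = ys" using Cons.prems
      by (metis append_Nil last_ConsL list.collapse walk_def)
    then show ?thesis using Cons.prems by simp
  next
    case (Cons y zs)
    then have "{x,y} \<in> E" "walk E xs" using Cons.prems walk_Cons2 by metis+
    moreover have "last xs = hd ys" using Cons.prems Cons by simp
    ultimately have "walk E (xs @ tl ys)" using Cons.IH Cons.prems by blast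
    then show ?thesis using \<open>{x,y} \<in> E\<close> Cons walk_Cons2 by (metis append_Cons)
  qed
qed

lemma walk_rev: "walk E xs \<Longrightarrow> walk E (rev xs)"
proof (induction xs)
  case Nil then show ?case by (simp add: walk_def)
next
  case (Cons x xs)
  show ?case
  proof (cases xs)
    case Nil then show ?thesis by simp
  next
    case (Cons y zs)
    then have e: "{x,y} \<in> E" "walk E xs" using Cons.prems walk_Cons2 by metis+
    then have w1: "walk E (rev xs)" using Cons.IH by blast
    have w2: "walk E [y, x]" using e walk_Cons2 by (metis insert_commute walk_single)
    have "last (rev xs) = hd [y,x]" using Cons by simp
    then have "walk E (rev xs @ tl [y,x])" using walk_append[OF w1 w2] by blast
    then show ?thesis by simp
  qed
qed

lemma walk_nonempty: "walk E xs \<Longrightarrow> xs \<noteq> []" by (simp add: walk_def)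

lemma conn_walk:
  assumes "connected_graph V E" "u \<in> V" "v \<in> V"
  obtains xs where "walk E xs" "hd xs = u" "last xs = v"
  using assms unfolding connected_graph_def by blast

lemma edge_in_V:
  assumes "simple_graph V E" "{x,y} \<in> E" shows "x \<in> V" "y \<in> V"
  using assms unfolding simple_graph_def by auto

lemma hdist_self: "hdist E A A = 0"
  using hdist_le[of E "[A]" A A 0] by simp

lemma add_edge_dist:
  assumes sg: "simple_graph V E" and cg: "connected_graph V E"
    and A: "A \<in> V" and v: "v \<in> V"
    and ij: "hdist E i A \<le> Suc (hdist E j A)" "hdist E j A \<le> Suc (hdist E i A)"
  shows "hdist (insert {i,j} E) v A = hdist E v A"
proof -
  let ?E' = "insert {i,j} E"
  obtain xs where xs: "walk E xs" "hd xs = v" "last xs = A" using conn_walk[OF cg v A] .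
  obtain ys where ys: "walk E ys" "hd ys = v" "last ys = A" "length ys = Suc (hdist E v A)"
    using hdist_walk[OF xs] by blast
  have "walk ?E' ys" using walk_mono ys(1) by blast
  then have le: "hdist ?E' v A \<le> hdist E v A" using hdist_le ys by metis
  have "walk ?E' xs" using walk_mono xs(1) by blast
  then obtain zs where zs: "walk ?E' zs" "hd zs = v" "last zs = A" "length zs = Suc (hdist ?E' v A)"
    using hdist_walk xs by metis
  have edges: "hdist E x A \<le> Suc (hdist E y A)" if "{x,y} \<in> ?E'" for x y
  proof (cases "{x,y} = {i,j}")
    case True then show ?thesis using ij by (auto simp: doubleton_eq_iff)
  next
    case False
    then have e: "{x,y} \<in> E" using that by simp
    then have "y \<in> V" using edge_in_V[OF sg] by blast
    then obtain ws where "walk E ws" "hd ws = y" "last ws = A" using conn_walk[OF cg _ A] by metis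
    then show ?thesis using hdist_edge[OF e] by blast
  qed
  have "hdist E (hd zs) A < length zs"
    by (rule walk_lower[where f="\<lambda>x. hdist E x A" and A=A and E'="?E'"])
       (use hdist_self edges zs in auto)
  then show ?thesis using le zs by simp
qed

lemma remove_edge_walk:
  assumes sg: "simple_graph V E" and cg: "connected_graph V E"
    and B: "B \<in> V" and eq: "hdist E i B = hdist E j B"
  shows "v \<in> V \<Longrightarrow> hdist E v B = n \<Longrightarrow>
     \<exists>xs. walk (E - {{i,j}}) xs \<and> hd xs = v \<and> last xs = B \<and> length xs = Suc n"
proof (induction n arbitrary: v)
  case 0
  obtain xs where xs: "walk E xs" "hd xs = v" "last xs = B" using conn_walk[OF cg 0(1) B] .
  obtain ys where ys: "walk E ys" "hd ys = v" "last ys = B" "length ys = Suc 0"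
    using hdist_walk[OF xs] 0 by metis
  then have "ys = [v]" by (cases ys) auto
  then have "v = B" using ys by simp
  then show ?case by (intro exI[of _ "[v]"]) simp
next
  case (Suc n)
  obtain xs where xs: "walk E xs" "hd xs = v" "last xs = B" using conn_walk[OF cg Suc(2) B] .
  obtain ys where ys: "walk E ys" "hd ys = v" "last ys = B" "length ys = Suc (Suc n)"
    using hdist_walk[OF xs] Suc by metis
  then obtain w rest where r: "ys = v # w # rest"
    by (cases ys; cases "tl ys") auto
  have e: "{v,w} \<in> E" and ww: "walk E (w # rest)" using ys r walk_Cons2 by metis+
  have "hdist E w B \<le> n" using hdist_le[OF ww, of w B n] ys r by simp
  moreover have "hdist E v B \<le> Suc (hdist E w B)"
    using hdist_edge[OF e ww, of B] ys r by simp
  ultimately have hw: "hdist E w B = n" using Suc by simp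
  have wV: "w \<in> V" using edge_in_V[OF sg e] by blast
  obtain zs where zs: "walk (E - {{i,j}}) zs" "hd zs = w" "last zs = B" "length zs = Suc n"
    using Suc.IH[OF wV hw] by blast
  have ne: "{v,w} \<noteq> {i,j}"
  proof
    assume "{v,w} = {i,j}"
    then have "hdist E v B = hdist E w B" using eq by (auto simp: doubleton_eq_iff)
    then show False using hw Suc by simp
  qed
  obtain zr where zr: "zs = w # zr" using zs by (cases zs) (auto simp: walk_def)
  have "walk (E - {{i,j}}) (v # zs)" using zs zr e ne walk_Cons2 by (metis DiffI singletonD)
  then show ?case using zs zr by (intro exI[of _ "v # zs"]) auto
qed

lemma remove_edge_dist:
  assumes sg: "simple_graph V E" and cg: "connected_graph V E"
    and B: "B \<in> V" and eq: "hdist E i B = hdist E j B" and v: "v \<in> V"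
  shows "hdist (E - {{i,j}}) v B = hdist E v B"
proof -
  let ?E' = "E - {{i,j}}"
  obtain xs where xs: "walk ?E' xs" "hd xs = v" "last xs = B" "length xs = Suc (hdist E v B)"
    using remove_edge_walk[OF sg cg B eq v] by blast
  have le: "hdist ?E' v B \<le> hdist E v B" using hdist_le xs by metis
  obtain zs where zs: "walk ?E' zs" "hd zs = v" "last zs = B" "length zs = Suc (hdist ?E' v B)"
    using hdist_walk[OF xs(1-3)] by blast
  have edges: "hdist E x B \<le> Suc (hdist E y B)" if "{x,y} \<in> ?E'" for x y
  proof -
    have e: "{x,y} \<in> E" using that by simp
    then have "y \<in> V" using edge_in_V[OF sg] by blast
    then obtain ws where "walk E ws" "hd ws = y" "last ws = B" using conn_walk[OF cg _ B] by metis
    then show ?thesis using hdist_edge[OF e] by blast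
  qed
  have "hdist E (hd zs) B < length zs"
    by (rule walk_lower[where f="\<lambda>x. hdist E x B" and A=B and E'="?E'"])
       (use hdist_self edges zs in auto)
  then show ?thesis using le zs by simp
qed

lemma remove_edge_conn:
  assumes sg: "simple_graph V E" and cg: "connected_graph V E"
    and B: "B \<in> V" and eq: "hdist E i B = hdist E j B"
  shows "connected_graph V (E - {{i,j}})"
  unfolding connected_graph_def
proof (intro ballI)
  fix u v assume u: "u \<in> V" and v: "v \<in> V"
  obtain xs where xs: "walk (E - {{i,j}}) xs" "hd xs = u" "last xs = B"
    using remove_edge_walk[OF sg cg B eq u refl] by blast
  obtain ys where ys: "walk (E - {{i,j}}) ys" "hd ys = v" "last ys = B"
    using remove_edge_walk[OF sg cg B eq v refl] by blast
  have ry: "walk (E - {{i,j}}) (rev ys)" using walk_rev ys by blast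
  have nx: "xs \<noteq> []" and ny: "ys \<noteq> []" using xs ys walk_nonempty by blast+
  have l: "last xs = hd (rev ys)" using xs ys ny by (simp add: hd_rev)
  have w: "walk (E - {{i,j}}) (xs @ tl (rev ys))" using walk_append[OF xs(1) ry l] .
  have "hd (xs @ tl (rev ys)) = u" using xs nx by simp
  moreover have "last (xs @ tl (rev ys)) = v"
  proof (cases "tl (rev ys) = []")
    case True
    then have "rev ys = [hd (rev ys)]" using ny by (metis list.collapse rev_is_Nil_conv)
    then have "ys = [B]" using ys by (metis hd_rev rev_singleton_conv)
    then show ?thesis using True xs ys by simp
  next
    case False
    then have "last (tl (rev ys)) = last (rev ys)" by (metis last_tl)
    then show ?thesis using False ys ny by (simp add: last_rev)
  qed
  ultimately show "\<exists>xs. walk (E - {{i,j}}) xs \<and> hd xs = u \<and> last xs = v" using w by blast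
qed

theorem mainTheorem5:
  fixes V :: "'a set" and E :: "'a set set" and C :: "'a list"
  assumes "simple_graph V E" and "connected_graph V E" and "construction_set V E C"
  shows "\<forall>i\<in>V. \<forall>j\<in>V. i \<noteq> j \<longrightarrow> ({i, j} \<in> E \<longleftrightarrow> Delta E C i j = 1)"
proof (intro ballI impI)
  note sg = assms(1) and cg = assms(2)
  fix i j assume iV: "i \<in> V" and jV: "j \<in> V" and ij: "i \<noteq> j"
  have Cne: "C \<noteq> []" and CV: "set C \<subseteq> V" and uniq:
    "\<And>E'. simple_graph V E' \<Longrightarrow> connected_graph V E' \<Longrightarrow> (\<forall>i\<in>V. dvec E' C i = dvec E C i) \<Longrightarrow> E' = E"
    using assms(3) unfolding construction_set_def landmark_set_def by blast+
  define t where "t = (\<lambda>k. \<bar>int (dvec E C i ! k) - int (dvec E C j ! k)\<bar>)"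
  have tk: "t k = \<bar>int (hdist E i (C!k)) - int (hdist E j (C!k))\<bar>" if "k < length C" for k
    using that by (simp add: t_def dvec_def)
  have D: "Delta E C i j = Max (t ` {..<length C})" by (simp add: Delta_def t_def)
  have fin: "finite (t ` {..<length C})" and ne: "t ` {..<length C} \<noteq> {}" using Cne by auto
  have ge: "t k \<le> Delta E C i j" if "k < length C" for k
    unfolding D by (rule Max_ge[OF fin]) (use that in blast)
  have "0 \<le> t 0" unfolding t_def by (rule abs_ge_zero)
  then have nonneg: "0 \<le> Delta E C i j" using ge[of 0] Cne by simp
  show "{i, j} \<in> E \<longleftrightarrow> Delta E C i j = 1"
  proof
    assume e: "{i,j} \<in> E"
    have b: "t k \<le> 1" if k: "k < length C" for k
    proof -
      have A: "C ! k \<in> V" using CV k by auto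
      obtain w1 where "walk E w1" "hd w1 = j" "last w1 = C!k" using conn_walk[OF cg jV A] .
      then have 1: "hdist E i (C!k) \<le> Suc (hdist E j (C!k))" by (rule hdist_edge[OF e])
      obtain w2 where w2: "walk E w2" "hd w2 = i" "last w2 = C!k" using conn_walk[OF cg iV A] .
      have e2: "{j,i} \<in> E" using e by (simp add: insert_commute)
      have 2: "hdist E j (C!k) \<le> Suc (hdist E i (C!k))" using hdist_edge[OF e2 w2] .
      show ?thesis using 1 2 tk[OF k] by (simp add: abs_if)
    qed
    have le1: "Delta E C i j \<le> 1" unfolding D using fin ne b by (simp add: Max_le_iff)
    have "Delta E C i j \<noteq> 0"
    proof
      assume z: "Delta E C i j = 0"
      have eqA: "hdist E i A = hdist E j A" if AC: "A \<in> set C" for A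
      proof -
        obtain k where k: "k < length C" "C ! k = A" using AC by (meson in_set_conv_nth)
        have "t k \<le> 0" using ge[OF k(1)] z by simp
        then show ?thesis using tk[OF k(1)] k by simp
      qed
      have B: "hd C \<in> V" using CV Cne by auto
      have sg': "simple_graph V (E - {{i,j}})" using sg unfolding simple_graph_def by blast
      have cg': "connected_graph V (E - {{i,j}})"
        using remove_edge_conn[OF sg cg B eqA] Cne by simp
      have "\<forall>v\<in>V. dvec (E - {{i,j}}) C v = dvec E C v"
        unfolding dvec_def using remove_edge_dist[OF sg cg] eqA CV by (auto intro!: map_cong)
      then have "E - {{i,j}} = E" using uniq sg' cg' by blast
      then show False using e by blast
    qed
    then show "Delta E C i j = 1" using le1 nonneg by simp
  next
    assume d: "Delta E C i j = 1"
    have bd: "hdist E i A \<le> Suc (hdist E j A) \<and> hdist E j A \<le> Suc (hdist E i A)" if AC: "A \<in> set C" for A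
    proof -
      obtain k where k: "k < length C" "C ! k = A" using AC by (meson in_set_conv_nth)
      have "t k \<le> 1" using ge[OF k(1)] d by simp
      then show ?thesis using tk[OF k(1)] k by (simp add: abs_if split: if_splits)
    qed
    have sg': "simple_graph V (insert {i,j} E)" using sg iV jV ij unfolding simple_graph_def by auto
    have cg': "connected_graph V (insert {i,j} E)" using cg unfolding connected_graph_def
      by (meson subset_insertI walk_mono)
    have "\<forall>v\<in>V. dvec (insert {i,j} E) C v = dvec E C v"
      unfolding dvec_def using add_edge_dist[OF sg cg] bd CV by (auto intro!: map_cong)
    then have "insert {i,j} E = E" using uniq sg' cg' by blast
    then show "{i,j} \<in> E" by blast
  qed
qed

end
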